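(* Let $m>l\ge1$ be integers and let $Q=(q_{ij})$ be an $m\times l$ real matrix such that for each $j=1,\dots,l$, $q_{jj}>\sum_{i\ne j,\,1\le i\le m}|q_{ij}|$. Let $\mathcal A$ be the set of all $l\times l$ submatrices of $Q$ (obtained by selecting $l$ of its $m$ rows), and let $S_1\in\mathcal A$ be the matrix formed by the first $l$ rows of $Q$. Then $\det S_1=\max_{S\in\mathcal A}|\det S|$. *)

theory Defs
  imports Main "Jordan_Normal_Form.Determinant" "Jordan_Normal_Form.DL_Submatrix"
begin

end

theory Submission imports Defs begin

lemma pick_interval: "j < l \<Longrightarrow> pick {0..<l} j = j"
proof (induction j)
  case 0 then show ?case by (auto intro!: Least_equality)
next
  case (Suc j) then show ?case by (auto intro!: Least_equality)
qed

lemma colop: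
  fixes q :: "nat \<Rightarrow> nat \<Rightarrow> real"
  assumes "0 < l"
  shows "det (mat l l (\<lambda>(i,j). q (g i) j)) =
         det (mat l l (\<lambda>(i,j). if j = 0 then q (g i) 0 else q (g i) j - c j * q (g i) 0))"
proof -
  define A where "A = mat l l (\<lambda>(i,j). q (g i) j)"
  define C :: "real mat" where "C = mat l l (\<lambda>(i,j). if i = j then 1 else if i = 0 then - c j else 0)"
  have A: "A \<in> carrier_mat l l" and C: "C \<in> carrier_mat l l" unfolding A_def C_def by auto
  have ut: "upper_triangular C" unfolding upper_triangular_def C_def by auto
  have "diag_mat C = replicate l 1" unfolding diag_mat_def C_def
    by (simp add: map_replicate_trivial list_eq_iff_nth_eq)
  then have dC: "det C = 1" using det_upper_triangular[OF ut C] by simp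
  have "A * C = mat l l (\<lambda>(i,j). if j = 0 then q (g i) 0 else q (g i) j - c j * q (g i) 0)"
  proof (rule eq_matI)
    fix i j assume i: "i < dim_row (mat l l (\<lambda>(i,j). if j = 0 then q (g i) 0 else q (g i) j - c j * q (g i) 0))"
      and j: "j < dim_col (mat l l (\<lambda>(i,j). if j = 0 then q (g i) 0 else q (g i) j - c j * q (g i) 0))"
    then have i: "i < l" and j: "j < l" by auto
    have "(A * C) $$ (i,j) = (\<Sum>k\<in>{0..<l}. q (g i) k * C $$ (k,j))"
      using i j A C by (simp add: scalar_prod_def A_def)
    also have "\<dots> = (\<Sum>k\<in>{0..<l}. (if k = j then q (g i) j else 0) + (if k = 0 then (if j = 0 then 0 else - c j * q (g i) 0) else 0))"
      by (rule sum.cong) (use j in \<open>auto simp: C_def\<close>)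
    also have "\<dots> = (if j = 0 then q (g i) 0 else q (g i) j - c j * q (g i) 0)"
      using j assms by (simp add: sum.distrib)
    finally show "(A * C) $$ (i,j) = mat l l (\<lambda>(i,j). if j = 0 then q (g i) 0 else q (g i) j - c j * q (g i) 0) $$ (i,j)"
      using i j by simp
  qed (use A C in auto)
  then show ?thesis using det_mult[OF A C] dC unfolding A_def by simp
qed


lemma dom_step:
  fixes q :: "nat \<Rightarrow> nat \<Rightarrow> real"
  assumes dom: "\<forall>j<Suc n. q j j > (\<Sum>i\<in>{0..<Suc m'}-{j}. \<bar>q i j\<bar>)"
    and nm: "n \<le> m'" and j: "j < n"
  defines "q' \<equiv> \<lambda>i j. q (Suc i) (Suc j) - q 0 (Suc j) * q (Suc i) 0 / q 0 0"
  shows "q' j j > (\<Sum>i\<in>{0..<m'}-{j}. \<bar>q' i j\<bar>)"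
proof -
  define U where "U = {0..<Suc m'} - {0, Suc j}"
  define a where "a = q 0 0"
  define u where "u = q 0 (Suc j)"
  define v where "v = q (Suc j) 0"
  define d where "d = q (Suc j) (Suc j)"
  define P where "P = (\<Sum>k\<in>U. \<bar>q k (Suc j)\<bar>)"
  define R where "R = (\<Sum>k\<in>U. \<bar>q k 0\<bar>)"
  have img: "Suc ` ({0..<m'}-{j}) = U" unfolding U_def
  proof (intro equalityI subsetI)
    fix k assume "k \<in> {0..<Suc m'} - {0, Suc j}"
    then have "k = Suc (k - 1)" "k - 1 \<in> {0..<m'}-{j}" by auto
    then show "k \<in> Suc ` ({0..<m'}-{j})" by (metis image_eqI)
  qed auto
  have reidx: "(\<Sum>i\<in>{0..<m'}-{j}. f (Suc i)) = (\<Sum>k\<in>U. f k)" for f :: "nat \<Rightarrow> real"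
    by (subst img[symmetric], subst sum.reindex) auto
  have d0: "q 0 0 > (\<Sum>i\<in>{0..<Suc m'}-{0}. \<bar>q i 0\<bar>)" using dom by auto
  have eqA: "{0..<Suc m'}-{0} = insert (Suc j) U" using j nm unfolding U_def by auto
  have "(\<Sum>i\<in>{0..<Suc m'}-{0}. \<bar>q i 0\<bar>) = \<bar>v\<bar> + R"
    unfolding eqA R_def v_def by (subst sum.insert) (auto simp: U_def)
  with d0 have H2: "a > \<bar>v\<bar> + R" unfolding a_def by simp
  have dj: "q (Suc j) (Suc j) > (\<Sum>i\<in>{0..<Suc m'}-{Suc j}. \<bar>q i (Suc j)\<bar>)" using dom j by auto
  have eqB: "{0..<Suc m'}-{Suc j} = insert 0 U" unfolding U_def by auto
  have "(\<Sum>i\<in>{0..<Suc m'}-{Suc j}. \<bar>q i (Suc j)\<bar>) = \<bar>u\<bar> + P"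
    unfolding eqB P_def u_def by (subst sum.insert) (auto simp: U_def)
  with dj have H1: "d > \<bar>u\<bar> + P" unfolding d_def by simp
  have R0: "R \<ge> 0" unfolding R_def by (simp add: sum_nonneg)
  have apos: "a > 0" using H2 R0 by linarith
  have "(\<Sum>i\<in>{0..<m'}-{j}. \<bar>q' i j\<bar>) \<le> (\<Sum>i\<in>{0..<m'}-{j}. \<bar>q (Suc i) (Suc j)\<bar> + \<bar>u\<bar> / a * \<bar>q (Suc i) 0\<bar>)"
  proof (rule sum_mono)
    fix i
    have "\<bar>q' i j\<bar> \<le> \<bar>q (Suc i) (Suc j)\<bar> + \<bar>q 0 (Suc j) * q (Suc i) 0 / q 0 0\<bar>"
      unfolding q'_def by (rule abs_triangle_ineq4)
    also have "\<bar>q 0 (Suc j) * q (Suc i) 0 / q 0 0\<bar> = \<bar>u\<bar> / a * \<bar>q (Suc i) 0\<bar>"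
      using apos unfolding u_def a_def by (simp add: abs_mult)
    finally show "\<bar>q' i j\<bar> \<le> \<bar>q (Suc i) (Suc j)\<bar> + \<bar>u\<bar> / a * \<bar>q (Suc i) 0\<bar>" .
  qed
  also have "\<dots> = P + \<bar>u\<bar> / a * R"
    unfolding sum.distrib sum_distrib_left[symmetric] P_def R_def
    by (simp add: reidx[of "\<lambda>k. \<bar>q k (Suc j)\<bar>"] reidx[of "\<lambda>k. \<bar>q k 0\<bar>"])
  also have "\<bar>u\<bar> / a * R \<le> \<bar>u\<bar> / a * (a - \<bar>v\<bar>)"
    using H2 apos by (intro mult_left_mono) auto
  also have "\<bar>u\<bar> / a * (a - \<bar>v\<bar>) = \<bar>u\<bar> - \<bar>u\<bar> * \<bar>v\<bar> / a"
    using apos by (simp add: field_simps)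
  finally have "(\<Sum>i\<in>{0..<m'}-{j}. \<bar>q' i j\<bar>) \<le> P + (\<bar>u\<bar> - \<bar>u\<bar> * \<bar>v\<bar> / a)" by simp
  also have "\<dots> < d - \<bar>u\<bar> * \<bar>v\<bar> / a" using H1 by simp
  also have "\<dots> \<le> d - u * v / a"
  proof -
    have "u * v \<le> \<bar>u\<bar> * \<bar>v\<bar>" by (metis abs_ge_self abs_mult)
    then have "u * v / a \<le> \<bar>u\<bar> * \<bar>v\<bar> / a" using apos by (simp add: divide_right_mono)
    then show ?thesis by simp
  qed
  also have "\<dots> = q' j j" unfolding q'_def u_def v_def d_def a_def by simp
  finally show ?thesis .
qed


lemma minor:
  fixes q :: "nat \<Rightarrow> nat \<Rightarrow> real"
  assumes i: "i < Suc n" and nz: "\<forall>i'<n. g (insert_index i i') \<noteq> 0"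
  shows "mat_delete (mat (Suc n) (Suc n) (\<lambda>(i,j). if j = 0 then q (g i) 0 else q (g i) j - q 0 j / q 0 0 * q (g i) 0)) i 0
     = mat n n (\<lambda>(i',j). (\<lambda>i j. q (Suc i) (Suc j) - q 0 (Suc j) * q (Suc i) 0 / q 0 0) (g (insert_index i i') - 1) j)"
proof (rule eq_matI)
  fix i' j assume "i' < dim_row (mat n n (\<lambda>(i',j). (\<lambda>i j. q (Suc i) (Suc j) - q 0 (Suc j) * q (Suc i) 0 / q 0 0) (g (insert_index i i') - 1) j))"
    "j < dim_col (mat n n (\<lambda>(i',j). (\<lambda>i j. q (Suc i) (Suc j) - q 0 (Suc j) * q (Suc i) 0 / q 0 0) (g (insert_index i i') - 1) j))"
  then have i': "i' < n" and j: "j < n" by auto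
  define r where "r = insert_index i i'"
  have r: "r < Suc n" using i i' unfolding r_def insert_index_def by auto
  have gr: "Suc (g r - 1) = g r" using nz i' unfolding r_def by auto
  have "mat_delete (mat (Suc n) (Suc n) (\<lambda>(i,j). if j = 0 then q (g i) 0 else q (g i) j - q 0 j / q 0 0 * q (g i) 0)) i 0 $$ (i',j)
      = q (g r) (Suc j) - q 0 (Suc j) / q 0 0 * q (g r) 0"
    unfolding mat_delete_def using i' j r by (simp add: r_def insert_index_def)
  also have "\<dots> = q (Suc (g r - 1)) (Suc j) - q 0 (Suc j) * q (Suc (g r - 1)) 0 / q 0 0"
    unfolding gr by simp
  finally show "mat_delete (mat (Suc n) (Suc n) (\<lambda>(i,j). if j = 0 then q (g i) 0 else q (g i) j - q 0 j / q 0 0 * q (g i) 0)) i 0 $$ (i',j)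
     = mat n n (\<lambda>(i',j). (\<lambda>i j. q (Suc i) (Suc j) - q 0 (Suc j) * q (Suc i) 0 / q 0 0) (g (insert_index i i') - 1) j) $$ (i',j)"
    using i' j by (simp add: r_def)
qed auto


lemma main:
  fixes q :: "nat \<Rightarrow> nat \<Rightarrow> real"
  assumes "l \<le> m" "\<forall>j<l. q j j > (\<Sum>i\<in>{0..<m}-{j}. \<bar>q i j\<bar>)"
  shows "det (mat l l (\<lambda>(i,j). q i j)) > 0 \<and>
    (\<forall>g. inj_on g {0..<l} \<and> g ` {0..<l} \<subseteq> {0..<m} \<longrightarrow>
       \<bar>det (mat l l (\<lambda>(i,j). q (g i) j))\<bar> \<le> det (mat l l (\<lambda>(i,j). q i j)))"
  using assms
proof (induction l arbitrary: m q)
  case 0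
  then show ?case by (simp add: det_def)
next
  case (Suc n)
  obtain m' where m: "m = Suc m'" using Suc.prems(1) by (cases m) auto
  have nm: "n \<le> m'" using Suc.prems(1) m by simp
  have dom: "\<forall>j<Suc n. q j j > (\<Sum>i\<in>{0..<Suc m'}-{j}. \<bar>q i j\<bar>)" using Suc.prems(2) m by simp
  have s0: "(\<Sum>i\<in>{0..<Suc m'}-{0}. \<bar>q i 0\<bar>) < q 0 0" using dom by auto
  have "(\<Sum>i\<in>{0..<Suc m'}-{0}. \<bar>q i 0\<bar>) \<ge> 0" by (rule sum_nonneg) simp
  then have apos: "q 0 0 > 0" using s0 by linarith
  define q' where "q' = (\<lambda>i j. q (Suc i) (Suc j) - q 0 (Suc j) * q (Suc i) 0 / q 0 0)"
  have dom': "\<forall>j<n. q' j j > (\<Sum>i\<in>{0..<m'}-{j}. \<bar>q' i j\<bar>)"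
    using dom_step[OF dom nm] unfolding q'_def by blast
  from Suc.IH[OF nm dom'] have
    pos: "det (mat n n (\<lambda>(i,j). q' i j)) > 0" and
    bnd: "\<And>g. inj_on g {0..<n} \<Longrightarrow> g ` {0..<n} \<subseteq> {0..<m'} \<Longrightarrow>
       \<bar>det (mat n n (\<lambda>(i,j). q' (g i) j))\<bar> \<le> det (mat n n (\<lambda>(i,j). q' i j))" by auto
  define D' where "D' = det (mat n n (\<lambda>(i,j). q' i j))"
  define A' where "A' = (\<lambda>g::nat\<Rightarrow>nat. mat (Suc n) (Suc n) (\<lambda>(i,j). if j = 0 then q (g i) 0 else q (g i) j - q 0 j / q 0 0 * q (g i) 0))"
  have A'c: "A' g \<in> carrier_mat (Suc n) (Suc n)" for g unfolding A'_def by simp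
  have col: "det (mat (Suc n) (Suc n) (\<lambda>(i,j). q (g i) j)) = det (A' g)" for g
    unfolding A'_def by (rule colop) simp
  have minor': "mat_delete (A' g) i 0 = mat n n (\<lambda>(i',j). q' (g (insert_index i i') - 1) j)"
    if "i < Suc n" "\<forall>i'<n. g (insert_index i i') \<noteq> 0" for g i
    unfolding A'_def q'_def by (rule minor[OF that])
  have sub: "inj_on (\<lambda>i'. g (insert_index i i') - 1) {0..<n} \<and> (\<lambda>i'. g (insert_index i i') - 1) ` {0..<n} \<subseteq> {0..<m'}"
    if "i < Suc n" "\<forall>i'<n. g (insert_index i i') \<noteq> 0" "inj_on g {0..<Suc n}" "g ` {0..<Suc n} \<subseteq> {0..<Suc m'}" for g i
  proof
    show "inj_on (\<lambda>i'. g (insert_index i i') - 1) {0..<n}"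
    proof (rule inj_onI)
      fix x y assume x: "x \<in> {0..<n}" and y: "y \<in> {0..<n}" and e: "g (insert_index i x) - 1 = g (insert_index i y) - 1"
      have "g (insert_index i x) \<noteq> 0" "g (insert_index i y) \<noteq> 0" using that(2) x y by auto
      with e have "g (insert_index i x) = g (insert_index i y)" by simp
      moreover have "insert_index i x \<in> {0..<Suc n}" "insert_index i y \<in> {0..<Suc n}"
        using x y unfolding insert_index_def by auto
      ultimately have "insert_index i x = insert_index i y" using that(3) inj_onD by metis
      then show "x = y" unfolding insert_index_def by (auto split: if_splits)
    qed
    show "(\<lambda>i'. g (insert_index i i') - 1) ` {0..<n} \<subseteq> {0..<m'}"
    proof
      fix k assume "k \<in> (\<lambda>i'. g (insert_index i i') - 1) ` {0..<n}"
      then obtain x where x: "x < n" and k: "k = g (insert_index i x) - 1" by auto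
      have "insert_index i x \<in> {0..<Suc n}" using x unfolding insert_index_def by auto
      then have "g (insert_index i x) \<in> {0..<Suc m'}" using that(4) by blast
      then have "g (insert_index i x) < Suc m'" by simp
      then show "k \<in> {0..<m'}" using k that(2) x by auto
    qed
  qed
  have caseB: "det (mat (Suc n) (Suc n) (\<lambda>(i,j). q (g i) j)) =
       q 0 0 * ((-1)^i0 * det (mat n n (\<lambda>(i',j). q' (g (insert_index i0 i') - 1) j)))"
    if i0: "i0 < Suc n" "g i0 = 0" and inj: "inj_on g {0..<Suc n}" for g i0
  proof -
    have nz: "\<forall>i'<n. g (insert_index i0 i') \<noteq> 0"
    proof (intro allI impI)
      fix i' assume "i' < n"
      then have "insert_index i0 i' \<in> {0..<Suc n}" "insert_index i0 i' \<noteq> i0"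
        unfolding insert_index_def by auto
      then show "g (insert_index i0 i') \<noteq> 0"
      proof (intro notI)
        assume h: "insert_index i0 i' \<in> {0..<Suc n}" "insert_index i0 i' \<noteq> i0" "g (insert_index i0 i') = 0"
        then have "g (insert_index i0 i') = g i0" using i0 by simp
        moreover have "i0 \<in> {0..<Suc n}" using i0 by simp
        ultimately have "insert_index i0 i' = i0" using inj_onD[OF inj] h(1) by blast
        then show False using h(2) by simp
      qed
    qed
    have "det (A' g) = (\<Sum>j<Suc n. A' g $$ (i0,j) * cofactor (A' g) i0 j)"
      by (rule laplace_expansion_row[OF A'c i0(1)])
    also have "\<dots> = (\<Sum>j<Suc n. if j = 0 then q 0 0 * cofactor (A' g) i0 0 else 0)"
      by (rule sum.cong) (use i0 apos in \<open>auto simp: A'_def\<close>)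
    also have "\<dots> = q 0 0 * cofactor (A' g) i0 0" by simp
    also have "\<dots> = q 0 0 * ((-1)^i0 * det (mat n n (\<lambda>(i',j). q' (g (insert_index i0 i') - 1) j)))"
      unfolding cofactor_def minor'[OF i0(1) nz] by simp
    finally show ?thesis using col by simp
  qed
  have idc: "det (mat (Suc n) (Suc n) (\<lambda>(i,j). q i j)) = q 0 0 * D'"
  proof -
    have eq: "(\<lambda>(i',j). q' (insert_index 0 i' - 1) j) = (\<lambda>(i',j). q' i' j)"
      by (auto simp: insert_index_def)
    have "det (mat (Suc n) (Suc n) (\<lambda>(i,j). q i j)) = q 0 0 * ((-1)^0 * det (mat n n (\<lambda>(i',j). q' (insert_index 0 i' - 1) j)))"
      using caseB[of 0 "\<lambda>i. i"] by simp
    then show ?thesis unfolding eq D'_def by simp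
  qed
  show ?case
  proof (intro conjI allI impI)
    show "det (mat (Suc n) (Suc n) (\<lambda>(i,j). q i j)) > 0" using idc apos pos unfolding D'_def by simp
    fix g assume g: "inj_on g {0..<Suc n} \<and> g ` {0..<Suc n} \<subseteq> {0..<m}"
    then have inj: "inj_on g {0..<Suc n}" and rng: "g ` {0..<Suc n} \<subseteq> {0..<Suc m'}" using m by auto
    show "\<bar>det (mat (Suc n) (Suc n) (\<lambda>(i,j). q (g i) j))\<bar> \<le> det (mat (Suc n) (Suc n) (\<lambda>(i,j). q i j))"
    proof (cases "\<exists>i0<Suc n. g i0 = 0")
      case True
      then obtain i0 where i0: "i0 < Suc n" "g i0 = 0" by auto
      have nz: "\<forall>i'<n. g (insert_index i0 i') \<noteq> 0"
      proof (intro allI impI)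
        fix i' assume "i' < n"
        then have "insert_index i0 i' \<in> {0..<Suc n}" "insert_index i0 i' \<noteq> i0"
          unfolding insert_index_def by auto
        then show "g (insert_index i0 i') \<noteq> 0"
      proof (intro notI)
        assume h: "insert_index i0 i' \<in> {0..<Suc n}" "insert_index i0 i' \<noteq> i0" "g (insert_index i0 i') = 0"
        then have "g (insert_index i0 i') = g i0" using i0 by simp
        moreover have "i0 \<in> {0..<Suc n}" using i0 by simp
        ultimately have "insert_index i0 i' = i0" using inj_onD[OF inj] h(1) by blast
        then show False using h(2) by simp
      qed
      qed
      have b: "\<bar>det (mat n n (\<lambda>(i',j). q' (g (insert_index i0 i') - 1) j))\<bar> \<le> D'"
        using sub[OF i0(1) nz inj rng] bnd unfolding D'_def by blast
      have "\<bar>det (mat (Suc n) (Suc n) (\<lambda>(i,j). q (g i) j))\<bar> = q 0 0 * \<bar>det (mat n n (\<lambda>(i',j). q' (g (insert_index i0 i') - 1) j))\<bar>"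
        unfolding caseB[OF i0 inj] using apos by (simp add: abs_mult)
      also have "\<dots> \<le> q 0 0 * D'" using b apos by simp
      finally show ?thesis using idc by simp
    next
      case False
      have nz: "\<forall>i'<n. g (insert_index i i') \<noteq> 0" if "i < Suc n" for i
        using False unfolding insert_index_def by auto
      have b: "\<bar>det (mat n n (\<lambda>(i',j). q' (g (insert_index i i') - 1) j))\<bar> \<le> D'" if "i < Suc n" for i
        using sub[OF that nz[OF that] inj rng] bnd unfolding D'_def by blast
      have "det (A' g) = (\<Sum>i<Suc n. A' g $$ (i,0) * cofactor (A' g) i 0)"
        by (rule laplace_expansion_column[OF A'c]) simp
      also have "\<dots> = (\<Sum>i<Suc n. q (g i) 0 * ((-1)^i * det (mat n n (\<lambda>(i',j). q' (g (insert_index i i') - 1) j))))"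
      proof (rule sum.cong)
        fix i assume "i \<in> {..<Suc n}"
        then have i: "i < Suc n" by simp
        have "A' g $$ (i,0) = q (g i) 0" using i by (simp add: A'_def)
        then show "A' g $$ (i,0) * cofactor (A' g) i 0 = q (g i) 0 * ((-1)^i * det (mat n n (\<lambda>(i',j). q' (g (insert_index i i') - 1) j)))"
          unfolding cofactor_def minor'[OF i nz[OF i]] by simp
      qed simp
      finally have e: "det (A' g) = \<dots>" .
      have "\<bar>det (A' g)\<bar> \<le> (\<Sum>i<Suc n. \<bar>q (g i) 0 * ((-1)^i * det (mat n n (\<lambda>(i',j). q' (g (insert_index i i') - 1) j)))\<bar>)"
        unfolding e by (rule sum_abs)
      also have "\<dots> \<le> (\<Sum>i<Suc n. \<bar>q (g i) 0\<bar> * D')"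
      proof (rule sum_mono)
        fix i assume "i \<in> {..<Suc n}"
        then have bi: "\<bar>det (mat n n (\<lambda>(i',j). q' (g (insert_index i i') - 1) j))\<bar> \<le> D'" by (intro b) simp
        have "\<bar>q (g i) 0 * ((-1)^i * det (mat n n (\<lambda>(i',j). q' (g (insert_index i i') - 1) j)))\<bar>
            = \<bar>q (g i) 0\<bar> * \<bar>det (mat n n (\<lambda>(i',j). q' (g (insert_index i i') - 1) j))\<bar>"
          by (simp add: abs_mult power_abs)
        also have "\<dots> \<le> \<bar>q (g i) 0\<bar> * D'" by (rule mult_left_mono[OF bi]) simp
        finally show "\<bar>q (g i) 0 * ((-1)^i * det (mat n n (\<lambda>(i',j). q' (g (insert_index i i') - 1) j)))\<bar> \<le> \<bar>q (g i) 0\<bar> * D'" .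
      qed
      also have "\<dots> = D' * (\<Sum>i\<in>{0..<Suc n}. \<bar>q (g i) 0\<bar>)"
        unfolding sum_distrib_left lessThan_atLeast0 by (simp add: mult.commute)
      also have "D' * (\<Sum>i\<in>{0..<Suc n}. \<bar>q (g i) 0\<bar>) \<le> D' * q 0 0"
      proof -
        have "(\<Sum>i\<in>{0..<Suc n}. \<bar>q (g i) 0\<bar>) = (\<Sum>k\<in>g ` {0..<Suc n}. \<bar>q k 0\<bar>)"
          by (rule sum.reindex[OF inj, symmetric, unfolded comp_def])
        also have "\<dots> \<le> (\<Sum>k\<in>{0..<Suc m'}-{0}. \<bar>q k 0\<bar>)"
          by (rule sum_mono2) (use rng False in auto)
        finally have "(\<Sum>i\<in>{0..<Suc n}. \<bar>q (g i) 0\<bar>) \<le> q 0 0" using s0 by simp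
        then show ?thesis using pos unfolding D'_def by (simp add: mult_left_mono)
      qed
      finally show ?thesis using col idc by (simp add: mult.commute)
    qed
  qed
qed


lemma submat_eq:
  fixes Q :: "real mat"
  assumes Q: "Q \<in> carrier_mat m l" and I: "I \<subseteq> {0..<m}" "card I = l"
  shows "submatrix Q I {0..<l} = mat l l (\<lambda>(i,j). (\<lambda>i j. Q $$ (i,j)) (pick I i) j)"
proof -
  have e1: "{i. i < dim_row Q \<and> i \<in> I} = I" using Q I by auto
  have e2: "{j. j < dim_col Q \<and> j \<in> {0..<l}} = {0..<l}" using Q by auto
  show ?thesis unfolding submatrix_def e1 e2 using I
    by (intro cong_mat) (auto simp: pick_interval)
qed

theorem lemma2p2:
  fixes Q :: "real mat" and m l :: nat
  assumes "Q \<in> carrier_mat m l"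
    and "m > l" and "l \<ge> 1"
    and "\<And>j. j < l \<Longrightarrow> Q $$ (j, j) > (\<Sum>i\<in>{0..<m} - {j}. \<bar>Q $$ (i, j)\<bar>)"
  shows "det (submatrix Q {0..<l} {0..<l}) =
         Max {\<bar>det (submatrix Q I {0..<l})\<bar> | I. I \<subseteq> {0..<m} \<and> card I = l}"
proof -
  define q where "q = (\<lambda>i j. Q $$ (i,j))"
  have M: "det (mat l l (\<lambda>(i,j). q i j)) > 0 \<and>
    (\<forall>g. inj_on g {0..<l} \<and> g ` {0..<l} \<subseteq> {0..<m} \<longrightarrow>
       \<bar>det (mat l l (\<lambda>(i,j). q (g i) j))\<bar> \<le> det (mat l l (\<lambda>(i,j). q i j)))"
    by (rule main) (use assms in \<open>auto simp: q_def\<close>)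
  have S1: "submatrix Q {0..<l} {0..<l} = mat l l (\<lambda>(i,j). q i j)"
    unfolding q_def using submat_eq[OF assms(1), of "{0..<l}"] assms(2)
    by (auto intro!: cong_mat simp: pick_interval)
  define D where "D = det (mat l l (\<lambda>(i,j). q i j))"
  have bound: "\<bar>det (submatrix Q I {0..<l})\<bar> \<le> D" if I: "I \<subseteq> {0..<m}" "card I = l" for I
  proof -
    have inj: "inj_on (pick I) {0..<l}"
    proof (rule inj_onI)
      fix x y assume "x \<in> {0..<l}" "y \<in> {0..<l}" "pick I x = pick I y"
      then show "x = y" using pick_mono[of _ I] I(2) by (metis atLeastLessThan_iff linorder_neqE_nat less_irrefl)
    qed
    have rng: "pick I ` {0..<l} \<subseteq> {0..<m}" using pick_in_set[of _ I] I by auto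
    show ?thesis unfolding submat_eq[OF assms(1) I] D_def using M inj rng by (auto simp: q_def)
  qed
  let ?A = "{\<bar>det (submatrix Q I {0..<l})\<bar> | I. I \<subseteq> {0..<m} \<and> card I = l}"
  have fin: "finite ?A"
  proof -
    have "?A = (\<lambda>I. \<bar>det (submatrix Q I {0..<l})\<bar>) ` {I. I \<subseteq> {0..<m} \<and> card I = l}" by auto
    moreover have "finite {I. I \<subseteq> {0..<m} \<and> card I = l}" by (rule finite_subset[of _ "Pow {0..<m}"]) auto
    ultimately show ?thesis by simp
  qed
  have Dpos: "D > 0" using M unfolding D_def by simp
  have mem: "D \<in> ?A"
  proof -
    have "\<bar>det (submatrix Q {0..<l} {0..<l})\<bar> = D" using S1 Dpos unfolding D_def by simp
    moreover have "{0..<l} \<subseteq> {0..<m} \<and> card {0..<l} = l" using assms(2) by auto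
    ultimately show ?thesis by blast
  qed
  have "Max ?A = D" by (rule Max_eqI[OF fin _ mem]) (use bound in auto)
  then show ?thesis using S1 unfolding D_def by simp
qed

end
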